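(* The structure $(B_\infty,T,\cdot,\equiv,1,\sigma_1,\sigma_1^{-1})$ is a canonical model for the link axioms. That is: (i) it satisfies the link axioms; (ii) every element of $B_\infty$ is the interpretation of a closed term of the language (built from $1,\sigma,\bar\sigma$ using $\cdot$ and $T$); (iii) for every structure $(S,T_1,*,\equiv',1',\sigma_1',\bar\sigma_1')$ satisfying the link axioms there is a unique homomorphism of structures $f:B_\infty\to S$, i.e. a unique map with $f(1)=1'$, $f(\sigma_1)=\sigma_1'$, $f(\sigma_1^{-1})=\bar\sigma_1'$, $f(x\cdot y)=f(x)*f(y)$, $f(T(x))=T_1(f(x))$ for all $x,y$, and $x\equiv y\Rightarrow f(x)\equiv' f(y)$.
   Context: Consider a first-order language (with equality) with signature $(\cdot,T,\equiv,1,\sigma,\bar\sigma)$: $\cdot$ binary function, $T$ unary function, $\equiv$ binary predicate, constants $1,\sigma,\bar\sigma$. The link axioms are: $\forall x,y,z\ x\cdot(y\cdot z)=(x\cdot y)\cdot z$; $\forall x\ 1\cdot x=x$; $\forall x\ x\cdot 1=x$; $\sigma\cdot\bar\sigma=\bar\sigma\cdot\sigma=1$; $\forall x,y\ T(x\cdot y)=T(x)\cdot T(y)$; $T(1)=1$; $\sigma\cdot T(\sigma)\cdot\sigma=T(\sigma)\cdot\sigma\cdot T(\sigma)$; $\forall b\ \sigma\cdot T(T(b))=T(T(b))\cdot\sigma$; $\equiv$ is reflexive, symmetric and transitive; $\forall x,y,z\ (y\cdot z=1\to x\equiv y\cdot x\cdot z)$; $\forall x\ x\equiv\sigma\cdot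 T(x)$; $\forall x\ x\equiv\bar\sigma\cdot T(x)$. $B_\infty$ is the group generated by $\{\sigma_i\}_{i\in\mathbb{N}}$ with relations $\sigma_i\sigma_j=\sigma_j\sigma_i$ for $i\ge j+2$ and $\sigma_i\sigma_{i+1}\sigma_i=\sigma_{i+1}\sigma_i\sigma_{i+1}$; $T$ is the homomorphism of $B_\infty$ with $T(\sigma_i)=\sigma_{i+1}$; $\cdot$ is the group multiplication, $1$ the identity, and $\sigma,\bar\sigma$ are interpreted as $\sigma_1,\sigma_1^{-1}$; $\equiv$ on $B_\infty$ is the equivalence relation generated by $aba^{-1}\equiv b$, $b\equiv\sigma_1T(b)$, $b\equiv\sigma_1^{-1}T(b)$ for all $a,b\in B_\infty$. *)

theory Defs
  imports Main
begin

text \<open>A letter (i, False) stands for sigma_(i+1), and (i, True) for its inverse.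
  So index 0 is sigma_1.\<close>

type_synonym bword = "(nat \<times> bool) list"

inductive braid_rel :: "bword \<Rightarrow> bword \<Rightarrow> bool" where
  br_refl: "braid_rel u u"
| br_sym: "braid_rel u v \<Longrightarrow> braid_rel v u"
| br_trans: "braid_rel u v \<Longrightarrow> braid_rel v w \<Longrightarrow> braid_rel u w"
| br_cong: "braid_rel u v \<Longrightarrow> braid_rel (a @ u @ b) (a @ v @ b)"
| br_cancel: "braid_rel [(i, e), (i, \<not> e)] []"
| br_comm: "j + 2 \<le> i \<Longrightarrow> braid_rel [(i, False), (j, False)] [(j, False), (i, False)]"
| br_braid: "braid_rel [(i, False), (Suc i, False), (i, False)]
                       [(Suc i, False), (i, False), (Suc i, False)]"

lemma braid_rel_equivp: "equivp braid_rel"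
  by (rule equivpI; auto simp: reflp_def symp_def transp_def intro: br_refl br_sym br_trans)

quotient_type braid = bword / braid_rel
  by (rule braid_rel_equivp)

lemma braid_rel_append:
  assumes "braid_rel u v" "braid_rel x y"
  shows "braid_rel (u @ x) (v @ y)"
proof -
  have "braid_rel ([] @ u @ x) ([] @ v @ x)" using assms(1) by (rule br_cong)
  moreover have "braid_rel (v @ x @ []) (v @ y @ [])" using assms(2) by (rule br_cong)
  ultimately show ?thesis by (auto intro: br_trans)
qed

definition shift_word :: "bword \<Rightarrow> bword" where
  "shift_word w = map (\<lambda>(i, e). (Suc i, e)) w"

lemma braid_rel_shift: "braid_rel u v \<Longrightarrow> braid_rel (shift_word u) (shift_word v)"
proof (induction rule: braid_rel.induct)
  case (br_cong u v a b)
  then show ?case using braid_rel.br_cong by (simp add: shift_word_def)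
next
  case (br_comm j i)
  then show ?case using braid_rel.br_comm[of "Suc j" "Suc i"] by (simp add: shift_word_def)
qed (auto simp: shift_word_def intro: braid_rel.intros)

lift_definition bmult :: "braid \<Rightarrow> braid \<Rightarrow> braid" is "(@)"
  by (rule braid_rel_append)

lift_definition bone :: braid is "[]" .

lift_definition bsig :: braid is "[(0, False)]" .

lift_definition bsigbar :: braid is "[(0, True)]" .

lift_definition bT :: "braid \<Rightarrow> braid" is shift_word
  by (rule braid_rel_shift)

definition binv :: "braid \<Rightarrow> braid" where
  "binv a = (SOME b. bmult a b = bone \<and> bmult b a = bone)"

inductive bequiv :: "braid \<Rightarrow> braid \<Rightarrow> bool" where
  be_refl: "bequiv x x"
| be_sym: "bequiv x y \<Longrightarrow> bequiv y x"
| be_trans: "bequiv x y \<Longrightarrow> bequiv y z \<Longrightarrow> bequiv x z"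
| be_conj: "bequiv (bmult (bmult a b) (binv a)) b"
| be_stab: "bequiv b (bmult bsig (bT b))"
| be_stab_inv: "bequiv b (bmult bsigbar (bT b))"

definition link_axioms ::
  "('a \<Rightarrow> 'a \<Rightarrow> 'a) \<Rightarrow> ('a \<Rightarrow> 'a) \<Rightarrow> ('a \<Rightarrow> 'a \<Rightarrow> bool) \<Rightarrow> 'a \<Rightarrow> 'a \<Rightarrow> 'a \<Rightarrow> bool" where
  "link_axioms m T E one s sb \<longleftrightarrow>
     (\<forall>x y z. m x (m y z) = m (m x y) z) \<and>
     (\<forall>x. m one x = x) \<and>
     (\<forall>x. m x one = x) \<and>
     m s sb = one \<and> m sb s = one \<and>
     (\<forall>x y. T (m x y) = m (T x) (T y)) \<and>
     T one = one \<and>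
     m (m s (T s)) s = m (m (T s) s) (T s) \<and>
     (\<forall>b. m s (T (T b)) = m (T (T b)) s) \<and>
     (\<forall>x. E x x) \<and>
     (\<forall>x y. E x y \<longrightarrow> E y x) \<and>
     (\<forall>x y z. E x y \<longrightarrow> E y z \<longrightarrow> E x z) \<and>
     (\<forall>x y z. m y z = one \<longrightarrow> E x (m (m y x) z)) \<and>
     (\<forall>x. E x (m s (T x))) \<and>
     (\<forall>x. E x (m sb (T x)))"

datatype lterm = LOne | LSig | LSigBar | LMul lterm lterm | LT lterm

fun term_eval ::
  "('a \<Rightarrow> 'a \<Rightarrow> 'a) \<Rightarrow> ('a \<Rightarrow> 'a) \<Rightarrow> 'a \<Rightarrow> 'a \<Rightarrow> 'a \<Rightarrow> lterm \<Rightarrow> 'a" where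
  "term_eval m T one s sb LOne = one"
| "term_eval m T one s sb LSig = s"
| "term_eval m T one s sb LSigBar = sb"
| "term_eval m T one s sb (LMul t u) = m (term_eval m T one s sb t) (term_eval m T one s sb u)"
| "term_eval m T one s sb (LT t) = T (term_eval m T one s sb t)"

end

theory Submission
  imports Defs
begin

lemmas babs = bmult.abs_eq bT.abs_eq bone.abs_eq bsig.abs_eq bsigbar.abs_eq braid.abs_eq_iff

definition inv_word :: "bword \<Rightarrow> bword" where
  "inv_word w = rev (map (\<lambda>(i, e). (i, \<not> e)) w)"

lemma inv_word_Cons: "inv_word (x # w) = inv_word w @ [(fst x, \<not> snd x)]"
  by (cases x) (simp add: inv_word_def)

lemma cong2: "braid_rel u v \<Longrightarrow> a @ u @ b = l \<Longrightarrow> a @ v @ b = r \<Longrightarrow> braid_rel l r"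
  using br_cong by blast

lemma inv_right: "braid_rel (w @ inv_word w) []"
proof (induction w)
  case Nil then show ?case by (simp add: inv_word_def br_refl)
next
  case (Cons x w)
  obtain i e where x: "x = (i, e)" by (cases x)
  have "braid_rel ((x # w) @ inv_word (x # w)) [x, (i, \<not> e)]"
    by (rule cong2[OF Cons.IH, of "[x]" "[(i, \<not> e)]"]) (auto simp: inv_word_Cons x)
  then show ?case using br_cancel[of i e] x by (blast intro: br_trans)
qed

lemma inv_left: "braid_rel (inv_word w @ w) []"
proof (induction w)
  case Nil then show ?case by (simp add: inv_word_def br_refl)
next
  case (Cons x w)
  obtain i e where x: "x = (i, e)" by (cases x)
  have "braid_rel ([(i, \<not> e), x]) []" using br_cancel[of i "\<not> e"] x by simp
  then have "braid_rel (inv_word (x # w) @ (x # w)) (inv_word w @ [] @ w)"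
    by (rule cong2[of _ _ "inv_word w" w]) (auto simp: inv_word_Cons x)
  then show ?case using Cons.IH by (auto intro: br_trans)
qed

lemma braid_inv_exists: "\<exists>w. bmult x w = bone \<and> bmult w x = bone"
proof (induction x rule: braid.abs_induct)
  case (1 y)
  show ?case
    by (rule exI[of _ "abs_braid (inv_word y)"]) (simp add: babs inv_right inv_left)
qed

lemma bmult_assoc: "bmult x (bmult y z) = bmult (bmult x y) z"
  by (induction x rule: braid.abs_induct, induction y rule: braid.abs_induct,
      induction z rule: braid.abs_induct) (simp add: babs)

lemma bone_l: "bmult bone x = x" by (induction x rule: braid.abs_induct) (simp add: babs)
lemma bone_r: "bmult x bone = x" by (induction x rule: braid.abs_induct) (simp add: babs)

lemma binv_unique: assumes "bmult y z = bone" shows "binv y = z"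
proof -
  obtain w where w: "bmult y w = bone" "bmult w y = bone" using braid_inv_exists by blast
  have zw: "z = w" by (metis assms w(2) bmult_assoc bone_l bone_r)
  have "bmult y (binv y) = bone \<and> bmult (binv y) y = bone"
    unfolding binv_def by (rule someI[of _ w]) (use w in simp)
  then have "binv y = w" by (metis w(2) bmult_assoc bone_l bone_r)
  with zw show ?thesis by simp
qed

lemma comm_letter:
  assumes "i \<ge> 2" shows "braid_rel [(0, False), (i, e)] [(i, e), (0, False)]"
proof (cases e)
  case False
  then show ?thesis using br_comm[of 0 i] assms by (auto intro: br_sym)
next
  case True
  have c: "braid_rel [(i,False),(0,False)] [(0,False),(i,False)]"
    using br_comm[of 0 i] assms by simp
  have s1: "braid_rel [(0, False), (i, True)] [(i,True),(i,False),(0, False), (i, True)]"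
    by (rule cong2[OF br_sym[OF br_cancel[of i True]], of "[]" "[(0, False), (i, True)]"]) auto
  have s2: "braid_rel [(i,True),(i,False),(0, False), (i, True)] [(i,True),(0,False),(i,False),(i, True)]"
    by (rule cong2[OF c, of "[(i,True)]" "[(i,True)]"]) auto
  have s3: "braid_rel [(i,True),(0,False),(i,False),(i, True)] [(i,True),(0,False)]"
    by (rule cong2[OF br_cancel[of i False], of "[(i,True),(0,False)]" "[]"]) auto
  show ?thesis using br_trans[OF br_trans[OF s1 s2] s3] True by simp
qed

lemma comm_word: "braid_rel ([(0, False)] @ shift_word (shift_word w)) (shift_word (shift_word w) @ [(0, False)])"
proof (induction w)
  case Nil then show ?case by (simp add: shift_word_def br_refl)
next
  case (Cons x w)
  obtain i e where x: "x = (i, e)" by (cases x)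
  let ?r = "shift_word (shift_word w)"
  have 1: "braid_rel ([(0, False)] @ shift_word (shift_word (x # w))) ([(Suc (Suc i), e), (0, False)] @ ?r)"
    by (rule cong2[OF comm_letter[of "Suc (Suc i)" e], of "[]" ?r]) (auto simp: x shift_word_def)
  have 2: "braid_rel ([(Suc (Suc i), e), (0, False)] @ ?r) (shift_word (shift_word (x # w)) @ [(0, False)])"
    by (rule cong2[OF Cons.IH, of "[(Suc (Suc i), e)]" "[]"]) (auto simp: x shift_word_def)
  show ?case using 1 2 by (rule br_trans)
qed

lemma part1: "link_axioms bmult bT bequiv bone bsig bsigbar"
  unfolding link_axioms_def
proof (intro conjI allI impI)
  fix x y z show "bmult x (bmult y z) = bmult (bmult x y) z" by (rule bmult_assoc)
next
  fix x show "bmult bone x = x" by (rule bone_l)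
next
  fix x show "bmult x bone = x" by (rule bone_r)
next
  show "bmult bsig bsigbar = bone" using br_cancel[of 0 False] by (simp add: babs)
next
  show "bmult bsigbar bsig = bone" using br_cancel[of 0 True] by (simp add: babs)
next
  fix x y show "bT (bmult x y) = bmult (bT x) (bT y)"
    by (induction x rule: braid.abs_induct, induction y rule: braid.abs_induct)
       (simp add: babs shift_word_def)
next
  show "bT bone = bone" by (simp add: babs shift_word_def br_refl)
next
  show "bmult (bmult bsig (bT bsig)) bsig = bmult (bmult (bT bsig) bsig) (bT bsig)"
    using br_braid[of 0] by (simp add: babs shift_word_def)
next
  fix b show "bmult bsig (bT (bT b)) = bmult (bT (bT b)) bsig"
  proof (induction b rule: braid.abs_induct)
    case (1 y) show ?case using comm_word[of y] by (simp add: babs)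
  qed
next
  fix x show "bequiv x x" by (rule be_refl)
next
  fix x y show "bequiv x y \<Longrightarrow> bequiv y x" by (rule be_sym)
next
  fix x y z show "bequiv x y \<Longrightarrow> bequiv y z \<Longrightarrow> bequiv x z" by (rule be_trans)
next
  fix x y z assume "bmult y z = bone"
  then have "binv y = z" by (rule binv_unique)
  then show "bequiv x (bmult (bmult y x) z)" using be_conj[of y x] by (auto intro: be_sym)
next
  fix x show "bequiv x (bmult bsig (bT x))" by (rule be_stab)
next
  fix x show "bequiv x (bmult bsigbar (bT x))" by (rule be_stab_inv)
qed

fun termw :: "bword \<Rightarrow> lterm" where
  "termw [] = LOne"
| "termw ((i, e) # w) = LMul ((LT ^^ i) (if e then LSigBar else LSig)) (termw w)"

lemma bT_pow_letter: "(bT ^^ i) (abs_braid [(0, e)]) = abs_braid [(i, e)]"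
  by (induction i) (simp_all add: babs shift_word_def)

lemma eval_LT_pow: "term_eval m T one s sb ((LT ^^ i) t) = (T ^^ i) (term_eval m T one s sb t)"
  by (induction i) simp_all

lemma part2: "term_eval bmult bT bone bsig bsigbar (termw w) = abs_braid w"
proof (induction w)
  case Nil then show ?case by (simp add: babs)
next
  case (Cons x w)
  obtain i e where x: "x = (i, e)" by (cases x)
  have "(bT ^^ i) (if e then bsigbar else bsig) = abs_braid [(i, e)]"
    using bT_pow_letter[of i e] by (cases e) (simp_all add: babs)
  moreover have "abs_braid ((i, e) # w) = bmult (abs_braid [(i, e)]) (abs_braid w)"
    by (simp add: babs)
  ultimately show ?case using Cons by (cases e) (simp_all add: x eval_LT_pow)
qed

fun fw :: "('a \<Rightarrow> 'a \<Rightarrow> 'a) \<Rightarrow> ('a \<Rightarrow> 'a) \<Rightarrow> 'a \<Rightarrow> 'a \<Rightarrow> 'a \<Rightarrow> bword \<Rightarrow> 'a" where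
  "fw m T one s sb [] = one"
| "fw m T one s sb ((i, e) # w) = m ((T ^^ i) (if e then sb else s)) (fw m T one s sb w)"

context
  fixes m :: "'a \<Rightarrow> 'a \<Rightarrow> 'a" and T1 E one s sb
  assumes L: "link_axioms m T1 E one s sb"
begin

lemma ax:
  "m x (m y z) = m (m x y) z" "m one x = x" "m x one = x" "m s sb = one" "m sb s = one"
  "T1 (m x y) = m (T1 x) (T1 y)" "T1 one = one"
  "m (m s (T1 s)) s = m (m (T1 s) s) (T1 s)" "m s (T1 (T1 b)) = m (T1 (T1 b)) s"
  using L unfolding link_axioms_def by auto

lemma pow_hom: "(T1 ^^ n) (m x y) = m ((T1 ^^ n) x) ((T1 ^^ n) y)" "(T1 ^^ n) one = one"
  by (induction n) (simp_all add: ax)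

lemma fw_append: "fw m T1 one s sb (u @ v) = m (fw m T1 one s sb u) (fw m T1 one s sb v)"
  by (induction u) (auto simp: ax)

lemma fw_resp: "braid_rel u v \<Longrightarrow> fw m T1 one s sb u = fw m T1 one s sb v"
proof (induction rule: braid_rel.induct)
  case (br_cong u v a b)
  then show ?case by (simp add: fw_append)
next
  case (br_cancel i e)
  have xy: "m (if e then sb else s) (if \<not> e then sb else s) = one" by (cases e) (simp_all add: ax)
  have "fw m T1 one s sb [(i, e), (i, \<not> e)] =
        m ((T1 ^^ i) (if e then sb else s)) (m ((T1 ^^ i) (if \<not> e then sb else s)) one)"
    by simp
  also have "\<dots> = (T1 ^^ i) (m (if e then sb else s) (if \<not> e then sb else s))"
    by (simp only: ax(3) pow_hom(1))
  also have "\<dots> = one" by (simp only: xy pow_hom(2))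
  also have "\<dots> = fw m T1 one s sb []" by (simp only: fw.simps(1))
  finally show ?case .
next
  case (br_comm j i)
  define k where "k = i - j - 2"
  have i: "i = j + (2 + k)" using br_comm unfolding k_def by simp
  have si: "(T1 ^^ i) s = (T1 ^^ j) (T1 (T1 ((T1 ^^ k) s)))"
    by (simp only: i funpow_add o_apply) (simp add: numeral_2_eq_2)
  have "fw m T1 one s sb [(i, False), (j, False)] = m ((T1 ^^ i) s) (m ((T1 ^^ j) s) one)" by simp
  also have "\<dots> = (T1 ^^ j) (m (T1 (T1 ((T1 ^^ k) s))) s)"
    by (simp only: si ax(3) pow_hom(1))
  also have "\<dots> = (T1 ^^ j) (m s (T1 (T1 ((T1 ^^ k) s))))"
    by (simp only: ax(9))
  also have "\<dots> = m ((T1 ^^ j) s) (m ((T1 ^^ i) s) one)"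
    by (simp only: si ax(3) pow_hom(1))
  also have "\<dots> = fw m T1 one s sb [(j, False), (i, False)]" by simp
  finally show ?case .
next
  case (br_braid i)
  have e: "(T1 ^^ Suc i) s = (T1 ^^ i) (T1 s)" by (simp add: funpow_Suc_right del: funpow.simps)
  have "fw m T1 one s sb [(i, False), (Suc i, False), (i, False)] =
        m ((T1 ^^ i) s) (m ((T1 ^^ Suc i) s) (m ((T1 ^^ i) s) one))" by simp
  also have "\<dots> = (T1 ^^ i) (m (m s (T1 s)) s)"
    by (simp only: e ax(3) ax(1) pow_hom(1))
  also have "\<dots> = (T1 ^^ i) (m (m (T1 s) s) (T1 s))"
    by (simp only: ax(8))
  also have "\<dots> = m ((T1 ^^ Suc i) s) (m ((T1 ^^ i) s) (m ((T1 ^^ Suc i) s) one))"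
    by (simp only: e ax(3) ax(1) pow_hom(1))
  also have "\<dots> = fw m T1 one s sb [(Suc i, False), (i, False), (Suc i, False)]" by simp
  finally show ?case .
qed (auto)

definition fb :: "braid \<Rightarrow> 'a" where "fb x = fw m T1 one s sb (rep_braid x)"

lemma fb_abs: "fb (abs_braid w) = fw m T1 one s sb w"
  unfolding fb_def by (rule fw_resp, rule Quotient3_rep_abs[OF Quotient3_braid br_refl])

lemma fb_mult: "fb (bmult x y) = m (fb x) (fb y)"
  by (induction x rule: braid.abs_induct, induction y rule: braid.abs_induct)
     (simp add: babs fb_abs fw_append)

lemma fw_shift: "fw m T1 one s sb (shift_word w) = T1 (fw m T1 one s sb w)"
  by (induction w) (auto simp: shift_word_def ax)

lemma fb_T: "fb (bT x) = T1 (fb x)"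
  by (induction x rule: braid.abs_induct) (simp add: babs fb_abs fw_shift)

lemma fb_one: "fb bone = one" by (simp add: babs fb_abs)
lemma fb_sig: "fb bsig = s" by (simp add: babs fb_abs ax)
lemma fb_sigbar: "fb bsigbar = sb" by (simp add: babs fb_abs ax)

lemma Eax: "E x x" "E x y \<Longrightarrow> E y x" "E x y \<Longrightarrow> E y z \<Longrightarrow> E x z"
  "m y z = one \<Longrightarrow> E x (m (m y x) z)" "E x (m s (T1 x))" "E x (m sb (T1 x))"
  using L unfolding link_axioms_def by blast+

lemma fb_equiv: "bequiv x y \<Longrightarrow> E (fb x) (fb y)"
proof (induction rule: bequiv.induct)
  case (be_conj a b)
  have "bmult a (binv a) = bone"
    using braid_inv_exists[of a] binv_unique by metis
  then have "m (fb a) (fb (binv a)) = one" using fb_mult fb_one by metis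
  then have "E (fb b) (m (m (fb a) (fb b)) (fb (binv a)))" by (rule Eax(4))
  then show ?case using Eax(2) by (simp only: fb_mult)
next
  case (be_refl x) show ?case by (rule Eax(1))
next
  case (be_sym x y) from be_sym.IH show ?case by (rule Eax(2))
next
  case (be_trans x y z) from be_trans.IH show ?case by (rule Eax(3))
next
  case (be_stab b) show ?case unfolding fb_mult fb_T fb_sig by (rule Eax(5))
next
  case (be_stab_inv b) show ?case unfolding fb_mult fb_T fb_sigbar by (rule Eax(6))
qed

lemma uniq:
  assumes "g bone = one" "g bsig = s" "g bsigbar = sb"
    "\<forall>x y. g (bmult x y) = m (g x) (g y)" "\<forall>x. g (bT x) = T1 (g x)"
  shows "g = fb"
proof
  fix x show "g x = fb x"
  proof (induction x rule: braid.abs_induct)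
    case (1 w)
    have gp: "g ((bT ^^ i) x) = (T1 ^^ i) (g x)" for i x using assms(5) by (induction i) auto
    show ?case
    proof (induction w)
      case Nil then show ?case using assms(1) fb_one by (simp add: babs)
    next
      case (Cons x w)
      obtain i e where x: "x = (i, e)" by (cases x)
      have "abs_braid (x # w) = bmult ((bT ^^ i) (abs_braid [(0, e)])) (abs_braid w)"
        by (simp add: bT_pow_letter babs x)
      moreover have "g (abs_braid [(0, e)]) = (if e then sb else s)"
        using assms(2,3) by (cases e) (simp_all add: babs)
      ultimately have "g (abs_braid (x # w)) = fw m T1 one s sb (x # w)"
        using Cons assms(4) gp by (cases e) (simp_all add: fb_abs x)
      then show ?case by (simp add: fb_abs)
    qed
  qed
qed

end

theorem theorem6p4:
  shows "link_axioms bmult bT bequiv bone bsig bsigbar \<and>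
    (\<forall>x::braid. \<exists>t. term_eval bmult bT bone bsig bsigbar t = x) \<and>
    (\<forall>(m :: 'a \<Rightarrow> 'a \<Rightarrow> 'a) T1 E one s sb. link_axioms m T1 E one s sb \<longrightarrow>
       (\<exists>!f :: braid \<Rightarrow> 'a.
          f bone = one \<and> f bsig = s \<and> f bsigbar = sb \<and>
          (\<forall>x y. f (bmult x y) = m (f x) (f y)) \<and>
          (\<forall>x. f (bT x) = T1 (f x)) \<and>
          (\<forall>x y. bequiv x y \<longrightarrow> E (f x) (f y))))"
proof (intro conjI allI impI)
  show "link_axioms bmult bT bequiv bone bsig bsigbar" by (rule part1)
next
  fix x :: braid show "\<exists>t. term_eval bmult bT bone bsig bsigbar t = x"
    by (induction x rule: braid.abs_induct) (use part2 in blast)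
next
  fix m :: "'a \<Rightarrow> 'a \<Rightarrow> 'a" and T1 E one s sb
  assume L: "link_axioms m T1 E one s sb"
  show "\<exists>!f :: braid \<Rightarrow> 'a.
          f bone = one \<and> f bsig = s \<and> f bsigbar = sb \<and>
          (\<forall>x y. f (bmult x y) = m (f x) (f y)) \<and>
          (\<forall>x. f (bT x) = T1 (f x)) \<and>
          (\<forall>x y. bequiv x y \<longrightarrow> E (f x) (f y))"
  proof (rule ex1I[of _ "fb m T1 one s sb"])
    show "fb m T1 one s sb bone = one \<and> fb m T1 one s sb bsig = s \<and> fb m T1 one s sb bsigbar = sb \<and>
          (\<forall>x y. fb m T1 one s sb (bmult x y) = m (fb m T1 one s sb x) (fb m T1 one s sb y)) \<and>
          (\<forall>x. fb m T1 one s sb (bT x) = T1 (fb m T1 one s sb x)) \<and>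
          (\<forall>x y. bequiv x y \<longrightarrow> E (fb m T1 one s sb x) (fb m T1 one s sb y))"
      using fb_one[OF L] fb_sig[OF L] fb_sigbar[OF L] fb_mult[OF L] fb_T[OF L] fb_equiv[OF L]
      by blast
  next
    fix g assume "g bone = one \<and> g bsig = s \<and> g bsigbar = sb \<and>
          (\<forall>x y. g (bmult x y) = m (g x) (g y)) \<and>
          (\<forall>x. g (bT x) = T1 (g x)) \<and>
          (\<forall>x y. bequiv x y \<longrightarrow> E (g x) (g y))"
    then show "g = fb m T1 one s sb" using uniq[OF L, of g] by blast
  qed
qed

end
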